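(* Let $n\ge 2$ and let $v_1,\ldots,v_n$ be positive integers with $\gcd(v_1,\ldots,v_n)=1$. Then every local maximum of the function $f(t)=\min_{1\le i\le n}\Vert t v_i\Vert$ on $\mathbb{R}$ occurs at a time of the form $t_0=\frac{m}{v_i+v_j}$, where $1\le i<j\le n$ and $m$ is an integer.
   Context: For a real number $x$, $\Vert x\Vert$ denotes the distance from $x$ to the nearest integer. *)

theory Defs
  imports Complex_Main
begin

definition dist_nint :: "real \<Rightarrow> real" where
  "dist_nint x = min (x - of_int \<lfloor>x\<rfloor>) (of_int \<lceil>x\<rceil> - x)"

definition is_local_max :: "(real \<Rightarrow> real) \<Rightarrow> real \<Rightarrow> bool" where
  "is_local_max f t0 \<longleftrightarrow> (\<exists>e>0. \<forall>t. \<bar>t - t0\<bar> < e \<longrightarrow> f t \<le> f t0)"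

end

theory Submission
  imports Defs
begin

lemma dn_le: "dist_nint x \<le> \<bar>x - real_of_int k\<bar>"
proof (cases "k \<le> \<lfloor>x\<rfloor>")
  case True
  then have "real_of_int k \<le> real_of_int \<lfloor>x\<rfloor>" by simp
  then show ?thesis unfolding dist_nint_def by linarith
next
  case False
  then have "\<lceil>x\<rceil> \<le> k" using ceiling_altdef[of x] by (auto split: if_splits)
  then have "real_of_int \<lceil>x\<rceil> \<le> real_of_int k" by simp
  then show ?thesis unfolding dist_nint_def
    using le_of_int_ceiling[of x] by linarith
qed

lemma dn_rep: "\<exists>k::int. dist_nint x = \<bar>x - real_of_int k\<bar>"
proof -
  have "dist_nint x = \<bar>x - real_of_int \<lfloor>x\<rfloor>\<bar> \<or> dist_nint x = \<bar>x - real_of_int \<lceil>x\<rceil>\<bar>"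
    unfolding dist_nint_def using of_int_floor_le[of x] le_of_int_ceiling[of x] by linarith
  then show ?thesis by blast
qed

lemma dn_form: "\<exists>k::int. x = real_of_int k + dist_nint x \<or> x = real_of_int k - dist_nint x"
proof -
  have "x = real_of_int \<lfloor>x\<rfloor> + dist_nint x \<or> x = real_of_int \<lceil>x\<rceil> - dist_nint x"
    unfolding dist_nint_def by linarith
  then show ?thesis by blast
qed

lemma dn_nonneg: "dist_nint x \<ge> 0"
  unfolding dist_nint_def using of_int_floor_le[of x] le_of_int_ceiling[of x] by linarith

lemma dn_half: "dist_nint x \<le> 1/2"
proof -
  have "\<lceil>x\<rceil> \<le> \<lfloor>x\<rfloor> + 1" using ceiling_altdef[of x] by (auto split: if_splits)
  then have "real_of_int \<lceil>x\<rceil> \<le> real_of_int \<lfloor>x\<rfloor> + 1" by linarith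
  then show ?thesis unfolding dist_nint_def by linarith
qed

lemma dn_lip: "dist_nint y \<le> dist_nint x + \<bar>x - y\<bar>"
proof -
  obtain k where k: "dist_nint x = \<bar>x - real_of_int k\<bar>" using dn_rep by blast
  have "dist_nint y \<le> \<bar>y - real_of_int k\<bar>" by (rule dn_le)
  then show ?thesis using k by linarith
qed

lemma dn_neg: "dist_nint (- x) = dist_nint x"
proof -
  have "\<lfloor>- x\<rfloor> = - \<lceil>x\<rceil>" "\<lceil>- x\<rceil> = - \<lfloor>x\<rfloor>"
    by (simp_all add: ceiling_def)
  then show ?thesis unfolding dist_nint_def by (simp add: min.commute)
qed

lemma dn_grow:
  assumes "x = real_of_int p + c" "0 \<le> c + d" "c + d \<le> 1/2"
  shows "dist_nint (x + d) \<ge> c + d"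
proof -
  obtain k where k: "dist_nint (x + d) = \<bar>x + d - real_of_int k\<bar>" using dn_rep by blast
  show ?thesis
  proof (cases "k \<le> p")
    case True
    then have "real_of_int k \<le> real_of_int p" by simp
    then show ?thesis using k assms by linarith
  next
    case False
    then have "real_of_int k \<ge> real_of_int p + 1" by simp
    then show ?thesis using k assms by linarith
  qed
qed

lemma move_right:
  fixes v :: "nat \<Rightarrow> nat" and I :: "nat set"
  assumes fin: "finite I" and ne: "I \<noteq> {}" and pos: "\<forall>k\<in>I. v k > 0" and e: "e > 0"
    and c: "c = Min ((\<lambda>k. dist_nint (t0 * real (v k))) ` I)" and chalf: "c < 1/2"
    and act: "\<forall>k\<in>I. dist_nint (t0 * real (v k)) = c \<longrightarrow> (\<exists>p::int. t0 * real (v k) = real_of_int p + c)"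
  shows "\<exists>t. \<bar>t - t0\<bar> < e \<and> Min ((\<lambda>k. dist_nint (t * real (v k))) ` I) > c"
proof -
  define g where "g k = dist_nint (t0 * real (v k))" for k
  have gc: "g k \<ge> c" if "k \<in> I" for k
    unfolding c g_def using fin that by (intro Min_le) auto
  define h where "h k = (if g k > c then g k - c else 1/2 - c)" for k
  have hpos: "h k > 0" for k unfolding h_def using chalf by auto
  define \<eta> where "\<eta> = Min (h ` I)"
  have etapos: "\<eta> > 0" unfolding \<eta>_def using fin ne hpos by (subst Min_gr_iff) auto
  have etale: "\<eta> \<le> h k" if "k \<in> I" for k unfolding \<eta>_def using fin that by auto
  define M where "M = (\<Sum>k\<in>I. real (v k)) + 1"
  have Mge: "real (v k) \<le> M" if "k \<in> I" for k
  proof -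
    have "real (v k) \<le> (\<Sum>k\<in>I. real (v k))"
      using fin that by (intro member_le_sum) auto
    then show ?thesis unfolding M_def by linarith
  qed
  have Mpos: "M > 0" unfolding M_def by (simp add: sum_nonneg add_nonneg_pos)
  define d where "d = min (e/2) (\<eta> / (2*M))"
  have dpos: "d > 0" unfolding d_def using e etapos Mpos by auto
  have dle: "d * real (v k) < h k" if "k \<in> I" for k
  proof -
    have "d * real (v k) \<le> (\<eta> / (2*M)) * M"
      using Mge[OF that] dpos unfolding d_def
      by (intro mult_mono) auto
    also have "\<dots> = \<eta>/2" using Mpos by simp
    also have "\<dots> < h k" using etale[OF that] etapos by linarith
    finally show ?thesis .
  qed
  have gt: "dist_nint ((t0 + d) * real (v k)) > c" if k: "k \<in> I" for k
  proof (cases "g k > c")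
    case True
    have "dist_nint (t0 * real (v k)) \<le> dist_nint ((t0 + d) * real (v k)) + \<bar>(t0 + d) * real (v k) - t0 * real (v k)\<bar>"
      by (rule dn_lip)
    moreover have "\<bar>(t0 + d) * real (v k) - t0 * real (v k)\<bar> = d * real (v k)"
      using dpos by (simp add: algebra_simps)
    ultimately show ?thesis using dle[OF k] True unfolding h_def g_def by auto
  next
    case False
    then have gk: "g k = c" using gc[OF k] by auto
    then obtain p :: int where p: "t0 * real (v k) = real_of_int p + c"
      using act k unfolding g_def by auto
    have vp: "d * real (v k) > 0" using pos k dpos by auto
    have "c \<ge> 0" using gk dn_nonneg unfolding g_def by metis
    then have "dist_nint (t0 * real (v k) + d * real (v k)) \<ge> c + d * real (v k)"
      using dle[OF k] False vp unfolding h_def by (intro dn_grow[OF p]) auto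
    then show ?thesis using vp by (simp add: algebra_simps)
  qed
  have "Min ((\<lambda>k. dist_nint ((t0 + d) * real (v k))) ` I) > c"
    using fin ne gt by (subst Min_gr_iff) auto
  moreover have "\<bar>(t0 + d) - t0\<bar> < e" using dpos e unfolding d_def by auto
  ultimately show ?thesis by blast
qed

theorem proposition4p1:
  fixes n :: nat and v :: "nat \<Rightarrow> nat" and t0 :: real
  assumes "n \<ge> 2"
    and "\<forall>i\<in>{1..n}. v i > 0"
    and "Gcd (v ` {1..n}) = 1"
    and "is_local_max (\<lambda>t. Min ((\<lambda>i. dist_nint (t * real (v i))) ` {1..n})) t0"
  shows "\<exists>i j. \<exists>m::int. 1 \<le> i \<and> i < j \<and> j \<le> n \<and> t0 = real_of_int m / real (v i + v j)"
proof (rule ccontr)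
  assume neg: "\<not> ?thesis"
  define I where "I = {1..n}"
  define F where "F t = Min ((\<lambda>i. dist_nint (t * real (v i))) ` I)" for t
  define c where "c = F t0"
  have fin: "finite I" and ne: "I \<noteq> {}" unfolding I_def using assms(1) by auto
  have pos: "\<forall>k\<in>I. v k > 0" using assms(2) unfolding I_def by auto
  obtain e where e: "e > 0" and loc: "\<And>t. \<bar>t - t0\<bar> < e \<Longrightarrow> F t \<le> c"
    using assms(4) unfolding is_local_max_def F_def c_def I_def by blast
  have gc: "dist_nint (t0 * real (v k)) \<ge> c" if "k \<in> I" for k
    unfolding c_def F_def using fin that by (intro Min_le) auto
  have cin: "c \<in> (\<lambda>i. dist_nint (t0 * real (v i))) ` I"
    unfolding c_def F_def using fin ne by (intro Min_in) auto
  have chalf: "c \<le> 1/2" using cin dn_half by auto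
  have pair: False if i: "i \<in> I" and j: "j \<in> I" and ij: "i \<noteq> j"
    and p: "t0 * real (v i) = real_of_int p + c" and q: "t0 * real (v j) = real_of_int q - c" for i j p q
  proof -
    have s: "t0 * real (v i + v j) = real_of_int (p + q)" using p q by (simp add: algebra_simps)
    have vpos: "real (v i + v j) > 0" using pos i by auto
    have t: "t0 = real_of_int (p + q) / real (v i + v j)" using s vpos by (simp add: field_simps)
    show False
    proof (cases "i < j")
      case True
      have "1 \<le> i \<and> i < j \<and> j \<le> n \<and> t0 = real_of_int (p + q) / real (v i + v j)"
        using True t i j unfolding I_def by auto
      then show False using neg by blast
    next
      case False
      then have "j < i" using ij by auto
      moreover have "t0 = real_of_int (p + q) / real (v j + v i)" using t by (simp add: add.commute)
      ultimately have "1 \<le> j \<and> j < i \<and> i \<le> n \<and> t0 = real_of_int (p + q) / real (v j + v i)"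
        using i j unfolding I_def by auto
      then show False using neg by blast
    qed
  qed
  have cne: "c \<noteq> 1/2"
  proof
    assume c2: "c = 1/2"
    have both: "(\<exists>p::int. t0 * real (v k) = real_of_int p + c) \<and> (\<exists>q::int. t0 * real (v k) = real_of_int q - c)"
      if k: "k \<in> I" for k
    proof -
      have gk: "dist_nint (t0 * real (v k)) = c" using gc[OF k] dn_half c2 by (metis order_antisym)
      obtain r :: int where "t0 * real (v k) = real_of_int r + c \<or> t0 * real (v k) = real_of_int r - c"
        using dn_form gk by metis
      then show ?thesis
      proof
        assume h: "t0 * real (v k) = real_of_int r + c"
        have "t0 * real (v k) = real_of_int (r + 1) - c" using h c2 by simp
        then show ?thesis using h by blast
      next
        assume h: "t0 * real (v k) = real_of_int r - c"
        have "t0 * real (v k) = real_of_int (r - 1) + c" using h c2 by simp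
        then show ?thesis using h by blast
      qed
    qed
    have "1 \<in> I" "2 \<in> I" unfolding I_def using assms(1) by auto
    then obtain p q :: int where "t0 * real (v 1) = real_of_int p + c" "t0 * real (v 2) = real_of_int q - c"
      using both by blast
    moreover have "(1::nat) \<noteq> 2" by simp
    ultimately show False using pair \<open>1 \<in> I\<close> \<open>2 \<in> I\<close> by blast
  qed
  then have clt: "c < 1/2" using chalf by auto
  show False
  proof (cases "\<forall>k\<in>I. dist_nint (t0 * real (v k)) = c \<longrightarrow> (\<exists>p::int. t0 * real (v k) = real_of_int p + c)")
    case True
    obtain t where "\<bar>t - t0\<bar> < e" "Min ((\<lambda>k. dist_nint (t * real (v k))) ` I) > c"
      using move_right[OF fin ne pos e _ clt True] unfolding c_def F_def by blast
    then show False using loc unfolding F_def by force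
  next
    case False
    then obtain j where j: "j \<in> I" "dist_nint (t0 * real (v j)) = c"
      and nj: "\<not> (\<exists>p::int. t0 * real (v j) = real_of_int p + c)" by blast
    obtain q :: int where q: "t0 * real (v j) = real_of_int q - c"
      using dn_form[of "t0 * real (v j)"] j(2) nj by metis
    have allR: "\<exists>q::int. t0 * real (v k) = real_of_int q - c"
      if k: "k \<in> I" "dist_nint (t0 * real (v k)) = c" for k
    proof -
      obtain r :: int where "t0 * real (v k) = real_of_int r + c \<or> t0 * real (v k) = real_of_int r - c"
        using dn_form k(2) by metis
      then show ?thesis
      proof
        assume h: "t0 * real (v k) = real_of_int r + c"
        then have "k \<noteq> j" using nj by blast
        then show ?thesis using pair[OF k(1) j(1) _ h q] by blast
      qed blast
    qed
    have eqm: "(\<lambda>k. dist_nint (- t * real (v k))) = (\<lambda>k. dist_nint (t * real (v k)))" for t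
    proof
      fix k
      have "- t * real (v k) = - (t * real (v k))" by simp
      then show "dist_nint (- t * real (v k)) = dist_nint (t * real (v k))" using dn_neg by metis
    qed
    have c': "c = Min ((\<lambda>k. dist_nint (- t0 * real (v k))) ` I)"
      unfolding eqm c_def F_def ..
    have act': "\<forall>k\<in>I. dist_nint (- t0 * real (v k)) = c \<longrightarrow> (\<exists>p::int. - t0 * real (v k) = real_of_int p + c)"
    proof (intro ballI impI)
      fix k assume k: "k \<in> I" "dist_nint (- t0 * real (v k)) = c"
      then have "dist_nint (t0 * real (v k)) = c" using eqm[of t0] by metis
      then obtain r :: int where "t0 * real (v k) = real_of_int r - c" using allR k(1) by blast
      then have "- t0 * real (v k) = real_of_int (- r) + c" by simp
      then show "\<exists>p::int. - t0 * real (v k) = real_of_int p + c" by blast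
    qed
    obtain t where t: "\<bar>t - (- t0)\<bar> < e" "Min ((\<lambda>k. dist_nint (t * real (v k))) ` I) > c"
      using move_right[OF fin ne pos e c' clt act'] by blast
    have "\<bar>(- t) - t0\<bar> < e" using t(1) by linarith
    then have "F (- t) \<le> c" by (rule loc)
    moreover have "F (- t) = Min ((\<lambda>k. dist_nint (t * real (v k))) ` I)"
      unfolding F_def eqm ..
    ultimately show False using t(2) by linarith
  qed
qed

end
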